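(* Let $A+f(A)$ be the free pseudosolution of $(B\le A,f)$, and let $A'$ be a subspace with $B\subseteq A'\subseteq A$. Then \[\delta\big(A+f(A')\,/\,A+f(B)\big)=\delta(A'/B).\] More precisely, for any basis $(e_1,\dots,e_t)$ of $N(A')$ over $N(B)$, the family $(\tilde f(e_1),\dots,\tilde f(e_t))$ is a basis of $N(A+f(A'))$ over $N(A+f(B))$, and $\dim(A+f(A')/A+f(B))=\dim(A'/B)$.
   Context: All vector spaces are over a finite field $\mathbb{F}_q$; $\bigwedge^2X$ is the exterior square. A $2$-nilpotent graded Lie algebra is presented as $V\oplus\bigwedge^2V/N(V)$ with $N(V)\subseteq\bigwedge^2V$ (bracket of $x,y\in V$ = class of $x\wedge y$). For a linear map $g\colon X\to Y$ between subspaces of a common space, $\tilde g\colon\bigwedge^2X\to\bigwedge^2(X+Y)$ is the linear map with $\tilde g(x\wedge y)=g(x)\wedge y+x\wedge g(y)$. A partially defined graded derivation is a linear map $f\colon B\to V$, $B\subseteq V$ finite-dimensional, with $\tilde f(N(B))\subseteq N(V)$, where $N(X):=N(V)\cap\bigwedge^2X$ for $X\subseteq V$. Free pseudosolution of $(B\le A,f)$ (for finite-dimensional $B\subseteq A\subseteq V$ and $f\colon B\to V$ a partially defined graded derivation): take an abstract space $U\supseteq A+f(B)$ with $\dim(U/(A+f(B)))=\dim(A/B)$, extend $f$ to linear $f\colon A\to U$ mapping a basis of $A$ over $B$ onto a basis of $U$ over $A+f(B)$ (so $U=A+f(A)$), and set $N(A+f(A)):=N(A+f(B))+\tilde f(N(A))$,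 with $N(A+f(B))=N(V)\cap\bigwedge^2(A+f(B))$, $N(A)=N(V)\cap\bigwedge^2A$. For subspaces $X\subseteq A+f(A)$ put $N(X):=N(A+f(A))\cap\bigwedge^2X$ (this agrees with $N(V)\cap\bigwedge^2X$ when $X\subseteq A+f(B)$), and for subspaces $X\subseteq A$ put $N(X)=N(V)\cap\bigwedge^2X$. Predimension: for subspaces $Y\subseteq X$ with $X$ finite-dimensional over $Y$, $\delta(X/Y):=\dim(X/Y)-\dim(N(X)/N(Y))$, computed in the relevant ambient algebra. *)

theory Defs
  imports Complex_Main "HOL-Library.Function_Algebras"
begin

text \<open>Vectors are functions 'i => 'k (pointwise operations), so every
  vector space over 'k embeds (take 'i to index a basis). Elements of exterior squares are
  modelled as alternating 2-tensors ('i * 'i) => 'k, with x wedge y given by the 2x2 minors.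
  For a subspace X, the exterior square of X is the span of all x wedge y with x, y in X
  (canonically isomorphic to the abstract exterior square of X).\<close>

definition fscale :: "'k::field \<Rightarrow> ('j \<Rightarrow> 'k) \<Rightarrow> ('j \<Rightarrow> 'k)" where
  "fscale c x = (\<lambda>j. c * x j)"

definition vspan :: "('j \<Rightarrow> 'k::field) set \<Rightarrow> ('j \<Rightarrow> 'k) set" where
  "vspan S = module.span fscale S"

definition vsubspace :: "('j \<Rightarrow> 'k::field) set \<Rightarrow> bool" where
  "vsubspace S = module.subspace fscale S"

definition vdim :: "('j \<Rightarrow> 'k::field) set \<Rightarrow> nat" where
  "vdim S = vector_space.dim fscale S"

definition fin_dim :: "('j \<Rightarrow> 'k::field) set \<Rightarrow> bool" where
  "fin_dim S \<longleftrightarrow> (\<exists>F. finite F \<and> S = vspan F)"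

definition ssum :: "('j \<Rightarrow> 'k::field) set \<Rightarrow> ('j \<Rightarrow> 'k) set \<Rightarrow> ('j \<Rightarrow> 'k) set" where
  "ssum X Y = vspan (X \<union> Y)"

definition wedge :: "('i \<Rightarrow> 'k::field) \<Rightarrow> ('i \<Rightarrow> 'k) \<Rightarrow> ('i \<times> 'i \<Rightarrow> 'k)" where
  "wedge x y = (\<lambda>(i, j). x i * y j - x j * y i)"

definition Lam2 :: "('i \<Rightarrow> 'k::field) set \<Rightarrow> ('i \<times> 'i \<Rightarrow> 'k) set" where
  "Lam2 X = vspan {wedge x y | x y. x \<in> X \<and> y \<in> X}"

definition lin_on :: "('j \<Rightarrow> 'k::field) set \<Rightarrow> (('j \<Rightarrow> 'k) \<Rightarrow> ('l \<Rightarrow> 'k)) \<Rightarrow> bool" where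
  "lin_on X g \<longleftrightarrow> (\<forall>x\<in>X. \<forall>y\<in>X. \<forall>c. g (x + y) = g x + g y \<and> g (fscale c x) = fscale c (g x))"

text \<open>The map tilde g on the exterior square of X: the linear map with
  x wedge y |-> g x wedge y + x wedge g y (only its values on Lam2 X matter).\<close>
definition tilde :: "(('i \<Rightarrow> 'k::field) \<Rightarrow> ('i \<Rightarrow> 'k)) \<Rightarrow> ('i \<Rightarrow> 'k) set
    \<Rightarrow> ('i \<times> 'i \<Rightarrow> 'k) \<Rightarrow> ('i \<times> 'i \<Rightarrow> 'k)" where
  "tilde g X = (SOME h. lin_on (Lam2 X) h \<and>
      (\<forall>x\<in>X. \<forall>y\<in>X. h (wedge x y) = wedge (g x) y + wedge x (g y)))"

definition rel_basis :: "('j \<Rightarrow> 'k::field) set \<Rightarrow> ('j \<Rightarrow> 'k) set \<Rightarrow> nat \<Rightarrow> (nat \<Rightarrow> ('j \<Rightarrow> 'k)) \<Rightarrow> bool" where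
  "rel_basis X Y t e \<longleftrightarrow>
     (\<forall>i<t. e i \<in> X) \<and> vspan (Y \<union> e ` {..<t}) = X \<and>
     (\<forall>u. (\<Sum>i<t. fscale (u i) (e i)) \<in> Y \<longrightarrow> (\<forall>i<t. u i = 0))"

definition delta :: "(('i \<Rightarrow> 'k::field) set \<Rightarrow> ('i \<times> 'i \<Rightarrow> 'k) set)
    \<Rightarrow> ('i \<Rightarrow> 'k) set \<Rightarrow> ('i \<Rightarrow> 'k) set \<Rightarrow> int" where
  "delta N X Y = (int (vdim X) - int (vdim Y)) - (int (vdim (N X)) - int (vdim (N Y)))"

end

theory Submission
  imports Defs
begin

lemma vs_fscale: "vector_space (fscale :: 'k::field \<Rightarrow> ('j \<Rightarrow> 'k) \<Rightarrow> ('j \<Rightarrow> 'k))"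
  by unfold_locales (auto simp: fscale_def algebra_simps fun_eq_iff)

lemma vs_mult: "vector_space ((*) :: 'k::field \<Rightarrow> 'k \<Rightarrow> 'k)"
  by unfold_locales (auto simp: algebra_simps)

global_interpretation fv: vector_space "fscale :: 'k::field \<Rightarrow> ('j \<Rightarrow> 'k) \<Rightarrow> ('j \<Rightarrow> 'k)"
  by (rule vs_fscale)

global_interpretation fk: vector_space_pair "fscale :: 'k::field \<Rightarrow> ('j \<Rightarrow> 'k) \<Rightarrow> ('j \<Rightarrow> 'k)" "(*) :: 'k \<Rightarrow> 'k \<Rightarrow> 'k"
  by (simp add: vector_space_pair_def vs_fscale vs_mult)

declare fk.vs2.scale_scale[simp del]

global_interpretation ff: vector_space_pair "fscale :: 'k::field \<Rightarrow> ('j \<Rightarrow> 'k) \<Rightarrow> ('j \<Rightarrow> 'k)" "fscale :: 'k::field \<Rightarrow> ('l \<Rightarrow> 'k) \<Rightarrow> ('l \<Rightarrow> 'k)"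
  by (simp add: vector_space_pair_def vs_fscale)

lemma vspan_eq: "vspan = fv.span" by (simp add: vspan_def fun_eq_iff)
lemma vsubspace_eq: "vsubspace = fv.subspace" by (simp add: vsubspace_def fun_eq_iff)
lemma vdim_eq: "vdim = fv.dim" by (simp add: vdim_def fun_eq_iff)

lemma fscale_app: "fscale c x j = c * x j" by (simp add: fscale_def)

lemma wedge_app: "wedge x y (p, q) = x p * y q - x q * y p" by (simp add: wedge_def)

lemma pair_ext: "(\<And>i j. f (i, j) = g (i, j)) \<Longrightarrow> f = g"
  by (rule ext, case_tac x, simp)

lemma wedge_add1: "wedge (x + y) z = wedge x z + wedge y z"
  by (rule pair_ext, simp only: wedge_app fscale_app plus_fun_apply minus_apply uminus_apply zero_fun_apply, simp add: algebra_simps)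
lemma wedge_add2: "wedge x (y + z) = wedge x y + wedge x z"
  by (rule pair_ext, simp only: wedge_app fscale_app plus_fun_apply minus_apply uminus_apply zero_fun_apply, simp add: algebra_simps)
lemma wedge_scale1: "wedge (fscale c x) y = fscale c (wedge x y)"
  by (rule pair_ext, simp only: wedge_app fscale_app plus_fun_apply minus_apply uminus_apply zero_fun_apply, simp add: algebra_simps)
lemma wedge_scale2: "wedge x (fscale c y) = fscale c (wedge x y)"
  by (rule pair_ext, simp only: wedge_app fscale_app plus_fun_apply minus_apply uminus_apply zero_fun_apply, simp add: algebra_simps)
lemma wedge_swap: "wedge y x = - wedge x y"
  by (rule pair_ext, simp only: wedge_app fscale_app plus_fun_apply minus_apply uminus_apply zero_fun_apply, simp add: algebra_simps)
lemma wedge_self[simp]: "wedge x x = 0"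
  by (rule pair_ext, simp only: wedge_app fscale_app plus_fun_apply minus_apply uminus_apply zero_fun_apply, simp add: algebra_simps)
lemma wedge_zero1[simp]: "wedge 0 y = 0"
  by (rule pair_ext, simp only: wedge_app fscale_app plus_fun_apply minus_apply uminus_apply zero_fun_apply, simp add: algebra_simps)
lemma wedge_zero2[simp]: "wedge x 0 = 0"
  by (rule pair_ext, simp only: wedge_app fscale_app plus_fun_apply minus_apply uminus_apply zero_fun_apply, simp add: algebra_simps)
lemma wedge_diff1: "wedge (x - y) z = wedge x z - wedge y z"
  by (rule pair_ext, simp only: wedge_app fscale_app plus_fun_apply minus_apply uminus_apply zero_fun_apply, simp add: algebra_simps)
lemma wedge_diff2: "wedge x (y - z) = wedge x y - wedge x z"
  by (rule pair_ext, simp only: wedge_app fscale_app plus_fun_apply minus_apply uminus_apply zero_fun_apply, simp add: algebra_simps)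

lemma Lam2_alt: "Lam2 X = fv.span {wedge x y | x y. x \<in> X \<and> y \<in> X}"
  by (simp add: Lam2_def vspan_eq)

lemma Lam2_subspace[simp]: "fv.subspace (Lam2 X)"
  by (simp add: Lam2_alt)

lemma wedge_in_Lam2: "x \<in> X \<Longrightarrow> y \<in> X \<Longrightarrow> wedge x y \<in> Lam2 X"
  unfolding Lam2_alt by (rule fv.span_base) blast

lemma Lam2_mono: "X \<subseteq> Y \<Longrightarrow> Lam2 X \<subseteq> Lam2 Y"
  unfolding Lam2_alt by (rule fv.span_mono) blast

lemma wedge_span_span:
  assumes x: "x \<in> fv.span S" and y: "y \<in> fv.span T"
  shows "wedge x y \<in> fv.span {wedge a b | a b. a \<in> S \<and> b \<in> T}"
proof -
  let ?G = "{wedge a b | a b. a \<in> S \<and> b \<in> T}"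
  have 1: "wedge a y \<in> fv.span ?G" if a: "a \<in> S" for a
    using y
  proof (induction y rule: fv.span_induct_alt)
    case base then show ?case by (simp only: wedge_zero2 fv.span_zero)
  next
    case (step c b y)
    have e: "wedge a (fscale c b + y) = fscale c (wedge a b) + wedge a y"
      by (simp only: wedge_add2 wedge_scale2)
    have "wedge a b \<in> fv.span ?G" using a step(1) by (intro fv.span_base) blast
    then show ?case unfolding e by (intro fv.span_add fv.span_scale step(2))
  qed
  show ?thesis using x
  proof (induction x rule: fv.span_induct_alt)
    case base then show ?case by (simp only: wedge_zero1 fv.span_zero)
  next
    case (step c a x)
    have e: "wedge (fscale c a + x) y = fscale c (wedge a y) + wedge x y"
      by (simp only: wedge_add1 wedge_scale1)
    show ?case unfolding e by (intro fv.span_add fv.span_scale step(2) 1 step(1))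
  qed
qed

lemma Lam2_span: "Lam2 (fv.span S) \<subseteq> fv.span {wedge a b | a b. a \<in> S \<and> b \<in> S}"
  unfolding Lam2_alt
  by (rule fv.span_minimal) (auto intro: wedge_span_span)

lemma Lam2_fin: "finite T \<Longrightarrow> X \<subseteq> fv.span T \<Longrightarrow> \<exists>T'. finite T' \<and> Lam2 X \<subseteq> fv.span T'"
proof -
  assume T: "finite T" "X \<subseteq> fv.span T"
  have "Lam2 X \<subseteq> Lam2 (fv.span T)" using T(2) by (rule Lam2_mono)
  also have "\<dots> \<subseteq> fv.span {wedge a b | a b. a \<in> T \<and> b \<in> T}" by (rule Lam2_span)
  also have "{wedge a b | a b. a \<in> T \<and> b \<in> T} = (\<lambda>(a,b). wedge a b) ` (T \<times> T)"
    by auto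
  finally have *: "Lam2 X \<subseteq> fv.span ((\<lambda>(a,b). wedge a b) ` (T \<times> T))" .
  show ?thesis using T by (intro exI[of _ "(\<lambda>(a,b). wedge a b) ` (T \<times> T)"]) (simp add: *)
qed

section \<open>Contraction and derivation\<close>

definition ctr :: "(('i \<Rightarrow> 'k::field) \<Rightarrow> 'k) \<Rightarrow> ('i \<times> 'i \<Rightarrow> 'k) \<Rightarrow> ('i \<Rightarrow> 'k)" where
  "ctr l w = (\<lambda>q. l (\<lambda>r. w (r, q)))"

abbreviation "lfun l \<equiv> Vector_Spaces.linear fscale (*) l"
abbreviation "lmap F \<equiv> Vector_Spaces.linear fscale fscale F"

lemma col_add: "(\<lambda>r. (v + w) (r, q)) = (\<lambda>r. v (r, q)) + (\<lambda>r. w (r, q))"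
  by (simp add: fun_eq_iff)
lemma col_scale: "(\<lambda>r. (fscale c w) (r, q)) = fscale c (\<lambda>r. w (r, q))"
  by (simp add: fun_eq_iff fscale_def)
lemma col_wedge: "(\<lambda>r. wedge x y (r, q)) = fscale (y q) x - fscale (x q) y"
  by (simp add: fun_eq_iff wedge_def fscale_def mult.commute)

lemma ctr_add: assumes l: "lfun l" shows "ctr l (v + w) = ctr l v + ctr l w"
proof (rule ext)
  fix q
  have "ctr l (v + w) q = l ((\<lambda>r. v (r, q)) + (\<lambda>r. w (r, q)))"
    by (simp add: ctr_def plus_fun_def)
  also have "\<dots> = l (\<lambda>r. v (r, q)) + l (\<lambda>r. w (r, q))" by (rule fk.linear_add[OF l])
  finally show "ctr l (v + w) q = (ctr l v + ctr l w) q" by (simp add: ctr_def)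
qed
lemma ctr_scale: assumes l: "lfun l" shows "ctr l (fscale c w) = fscale c (ctr l w)"
proof (rule ext)
  fix q
  have "ctr l (fscale c w) q = l (fscale c (\<lambda>r. w (r, q)))"
    by (simp add: ctr_def fscale_def)
  also have "\<dots> = c * l (\<lambda>r. w (r, q))" by (rule fk.linear_scale[OF l])
  finally show "ctr l (fscale c w) q = fscale c (ctr l w) q" by (simp add: ctr_def fscale_def)
qed
lemma ctr_zero: "lfun l \<Longrightarrow> ctr l 0 = 0"
  using ctr_scale[of l 0 0] by (simp add: fscale_def zero_fun_def)
lemma ctr_wedge: assumes l: "lfun l" shows "ctr l (wedge x y) = fscale (l x) y - fscale (l y) x"
proof (rule ext)
  fix q
  have "ctr l (wedge x y) q = l (fscale (y q) x - fscale (x q) y)"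
    by (simp add: ctr_def col_wedge)
  also have "\<dots> = y q * l x - x q * l y" by (simp add: fk.linear_diff[OF l] fk.linear_scale[OF l])
  finally show "ctr l (wedge x y) q = (fscale (l x) y - fscale (l y) x) q" by (simp add: fscale_def mult.commute)
qed

definition HH :: "(('i \<Rightarrow> 'k::field) \<Rightarrow> ('i \<Rightarrow> 'k)) \<Rightarrow> ('i \<times> 'i \<Rightarrow> 'k) \<Rightarrow> ('i \<times> 'i \<Rightarrow> 'k)" where
  "HH F w = (\<lambda>(p, q). F (\<lambda>r. w (r, q)) p - F (\<lambda>r. w (r, p)) q)"

lemma HH_col: "HH F w (p, q) = F (\<lambda>r. w (r, q)) p - F (\<lambda>r. w (r, p)) q"
  by (simp add: HH_def)
lemma HH_add: assumes F: "lmap F" shows "HH F (v + w) = HH F v + HH F w"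
proof -
  have "F (\<lambda>r. (v + w) (r, q)) = F (\<lambda>r. v (r, q)) + F (\<lambda>r. w (r, q))" for q
    using ff.linear_add[OF F, of "\<lambda>r. v (r, q)" "\<lambda>r. w (r, q)"] by (simp add: plus_fun_def)
  then show ?thesis by (simp add: fun_eq_iff HH_col)
qed
lemma HH_scale: assumes F: "lmap F" shows "HH F (fscale c w) = fscale c (HH F w)"
proof -
  have "F (\<lambda>r. (fscale c w) (r, q)) = fscale c (F (\<lambda>r. w (r, q)))" for q
    using ff.linear_scale[OF F, of c "\<lambda>r. w (r, q)"] by (simp add: fscale_def)
  then show ?thesis by (simp add: fun_eq_iff HH_col fscale_def right_diff_distrib)
qed
lemma HH_zero: "lmap F \<Longrightarrow> HH F 0 = 0"
  using HH_scale[of F 0 0] by (simp add: fscale_def zero_fun_def)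
lemma HH_wedge: assumes F: "lmap F" shows "HH F (wedge x y) = wedge (F x) y + wedge x (F y)"
proof -
  have "F (\<lambda>r. wedge x y (r, q)) = fscale (y q) (F x) - fscale (x q) (F y)" for q
    unfolding col_wedge by (simp add: ff.linear_diff[OF F] ff.linear_scale[OF F])
  note c = this
  show ?thesis
  proof (rule ext, clarify)
    fix p q
    show "HH F (wedge x y) (p,q) = (wedge (F x) y + wedge x (F y)) (p,q)"
      unfolding HH_col c by (simp add: fscale_def wedge_def algebra_simps)
  qed
qed

lemma HH_linear: assumes F: "lmap F" shows "lmap (HH F)"
  by (simp only: Vector_Spaces.linear_iff) (intro conjI allI vs_fscale HH_add[OF F] HH_scale[OF F])

lemma ctr_linear: assumes l: "lfun l" shows "lmap (ctr l)"
  by (simp only: Vector_Spaces.linear_iff) (intro conjI allI vs_fscale ctr_add[OF l] ctr_scale[OF l])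

lemma lfun_vanish_span:
  assumes l: "lfun l" and z: "\<And>x. x \<in> S \<Longrightarrow> l x = 0" and x: "x \<in> fv.span S"
  shows "l x = 0"
  by (rule fk.linear_eq_0_on_span[OF l z x])

lemma sep_functional:
  assumes Y: "fv.subspace Y" and c: "c \<notin> Y"
  shows "\<exists>l. lfun l \<and> (\<forall>y\<in>Y. l y = 0) \<and> l c = 1"
proof -
  obtain BY where BY: "BY \<subseteq> Y" "fv.independent BY" "Y \<subseteq> fv.span BY"
    by (rule fv.basis_exists)
  have sp: "fv.span BY \<subseteq> Y" using BY(1) Y by (rule fv.span_minimal)
  with c have cn: "c \<notin> fv.span BY" by blast
  have ind: "fv.independent (insert c BY)" by (rule fv.independent_insertI[OF cn BY(2)])
  obtain g where g: "lfun g" "\<forall>x\<in>insert c BY. g x = (if x = c then 1 else 0)"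
    using fk.linear_independent_extend[OF ind, where f="\<lambda>x. if x = c then 1 else 0"] by blast
  have cB: "c \<notin> BY" using c BY(1) by blast
  have "\<forall>y\<in>Y. g y = 0"
  proof
    fix y assume "y \<in> Y"
    then have "y \<in> fv.span BY" using BY(3) by blast
    then show "g y = 0"
      by (rule lfun_vanish_span[OF g(1), rotated]) (use g(2) cB in auto)
  qed
  moreover have "g c = 1" using g(2) by simp
  ultimately show ?thesis using g(1) by blast
qed

lemma sum_indicator_fscale:
  "i < (t::nat) \<Longrightarrow> (\<Sum>k<t. fscale (if k = i then a else 0) (e k)) = fscale a (e i)"
proof -
  assume i: "i < t"
  have "(\<Sum>k<t. fscale (if k = i then a else 0) (e k)) = (\<Sum>k<t. if k = i then fscale a (e i) else 0)"
    by (rule sum.cong) auto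
  also have "\<dots> = fscale a (e i)" using i by (subst sum.delta) auto
  finally show ?thesis .
qed

lemma rel_indep:
  assumes Y: "fv.subspace Y" and BY: "BY \<subseteq> Y" "fv.independent BY"
    and e: "\<forall>u. (\<Sum>i<(t::nat). fscale (u i) (e i)) \<in> Y \<longrightarrow> (\<forall>i<t. u i = (0::'k::field))"
  shows "inj_on e {..<t}" and "e ` {..<t} \<inter> Y = {}"
    and "fv.independent (BY \<union> e ` {..<t})"
proof -
  show disj: "e ` {..<t} \<inter> Y = {}"
  proof (rule ccontr)
    assume "e ` {..<t} \<inter> Y \<noteq> {}"
    then obtain i where i: "i < t" "e i \<in> Y" by auto
    have "(\<Sum>k<t. fscale (if k = i then 1 else 0) (e k)) \<in> Y"
      using sum_indicator_fscale[OF i(1), of 1 e] i(2) by simp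
    from e[rule_format, OF this i(1)] show False by simp
  qed
  show inj: "inj_on e {..<t}"
  proof (rule inj_onI, rule ccontr)
    fix i j assume i: "i \<in> {..<t}" and j: "j \<in> {..<t}" and eq: "e i = e j" and ne: "i \<noteq> j"
    define u where "u k = (if k = i then (1::'k) else 0) - (if k = j then 1 else 0)" for k
    have "(\<Sum>k<t. fscale (u k) (e k)) = (\<Sum>k<t. fscale (if k = i then 1 else 0) (e k)) - (\<Sum>k<t. fscale (if k = j then 1 else 0) (e k))"
      unfolding u_def fv.scale_left_diff_distrib sum_subtractf ..
    also have "\<dots> = 0" using i j eq by (simp add: sum_indicator_fscale)
    finally have "(\<Sum>k<t. fscale (u k) (e k)) \<in> Y" using fv.subspace_0[OF Y] by simp
    from e[rule_format, OF this] have "u i = 0" using i by blast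
    then show False using ne by (simp add: u_def)
  qed
  show "fv.independent (BY \<union> e ` {..<t})"
    unfolding fv.independent_explicit_module
  proof (intro allI impI)
    fix T u v
    assume T: "finite T" "T \<subseteq> BY \<union> e ` {..<t}" and s0: "(\<Sum>v\<in>T. fscale (u v) v) = 0" and v: "v \<in> T"
    let ?E = "e ` {..<t}"
    define T1 where "T1 = T \<inter> ?E"
    define T2 where "T2 = T - ?E"
    have T2B: "T2 \<subseteq> BY" using T(2) by (auto simp: T2_def)
    have split: "(\<Sum>v\<in>T. fscale (u v) v) = (\<Sum>v\<in>T1. fscale (u v) v) + (\<Sum>v\<in>T2. fscale (u v) v)"
      unfolding T1_def T2_def by (rule sum.Int_Diff[OF T(1)])
    have s2Y: "(\<Sum>v\<in>T2. fscale (u v) v) \<in> Y"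
      by (rule fv.subspace_sum[OF Y]) (use T2B BY(1) fv.subspace_scale[OF Y] in blast)
    have s1: "(\<Sum>v\<in>T1. fscale (u v) v) = - (\<Sum>v\<in>T2. fscale (u v) v)"
      using s0 split by (simp add: eq_neg_iff_add_eq_0)
    define u' where "u' k = (if e k \<in> T then u (e k) else 0)" for k
    have "(\<Sum>k<t. fscale (u' k) (e k)) = (\<Sum>x\<in>?E. fscale (if x \<in> T then u x else 0) x)"
      unfolding u'_def by (rule sum.reindex[OF inj, unfolded comp_def, symmetric])
    also have "\<dots> = (\<Sum>x\<in>?E. if x \<in> T then fscale (u x) x else 0)"
      by (rule sum.cong) auto
    also have "\<dots> = (\<Sum>x\<in>T1. fscale (u x) x)"
      unfolding T1_def by (simp add: sum.If_cases Int_commute)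
    finally have eqs: "(\<Sum>k<t. fscale (u' k) (e k)) = (\<Sum>x\<in>T1. fscale (u x) x)" .
    have "(\<Sum>k<t. fscale (u' k) (e k)) \<in> Y"
      unfolding eqs s1 by (rule fv.subspace_neg[OF Y s2Y])
    from e[rule_format, OF this] have u'0: "\<forall>k<t. u' k = 0" by blast
    have uT1: "u x = 0" if "x \<in> T1" for x
    proof -
      from that obtain k where k: "k < t" "x = e k" "x \<in> T" by (auto simp: T1_def)
      then show ?thesis using u'0 by (auto simp: u'_def)
    qed
    then have "(\<Sum>x\<in>T1. fscale (u x) x) = 0" by simp
    then have "(\<Sum>v\<in>T2. fscale (u v) v) = 0" using s1 by simp
    then have uT2: "u x = 0" if "x \<in> T2" for x
      using fv.independentD[OF BY(2) _ T2B, of u x] T(1) that by (auto simp: T2_def)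
    show "u v = 0" using v uT1[of v] uT2[of v] unfolding T1_def T2_def by blast
  qed
qed

lemma rel_basis_dim:
  assumes rb: "rel_basis X Y t e" and Y: "fv.subspace Y" and T: "finite T" "Y \<subseteq> fv.span T"
  shows "fv.dim X = fv.dim Y + t"
proof -
  obtain BY where BY: "BY \<subseteq> Y" "fv.independent BY" "Y \<subseteq> fv.span BY" "card BY = fv.dim Y"
    by (rule fv.basis_exists)
  have fin: "finite BY" using fv.independent_span_bound[OF T(1) BY(2)] BY(1) T(2) by blast
  from rb have sp: "fv.span (Y \<union> e ` {..<t}) = X"
     and ind: "\<forall>u. (\<Sum>i<t. fscale (u i) (e i)) \<in> Y \<longrightarrow> (\<forall>i<t. u i = 0)"
    by (auto simp: rel_basis_def vspan_eq)
  note R = rel_indep[OF Y BY(1,2) ind]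
  have "fv.span (BY \<union> e ` {..<t}) = fv.span (Y \<union> e ` {..<t})"
    unfolding fv.span_eq
  proof
    show "BY \<union> e ` {..<t} \<subseteq> fv.span (Y \<union> e ` {..<t})"
      using BY(1) fv.span_superset[of "Y \<union> e ` {..<t}"] by blast
    show "Y \<union> e ` {..<t} \<subseteq> fv.span (BY \<union> e ` {..<t})"
      using BY(3) fv.span_mono[of BY "BY \<union> e ` {..<t}"] fv.span_superset[of "BY \<union> e ` {..<t}"] by blast
  qed
  then have "fv.dim X = card (BY \<union> e ` {..<t})"
    using sp fv.dim_span_eq_card_independent[OF R(3)] by simp
  also have "\<dots> = card BY + card (e ` {..<t})"
    by (rule card_Un_disjoint) (use fin R(2) BY(1) in auto)
  also have "card (e ` {..<t}) = t" using card_image[OF R(1)] by simp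
  finally show ?thesis using BY(4) by simp
qed

lemma rel_basis_exists:
  assumes X: "fv.subspace X" and Y: "fv.subspace Y" and YX: "Y \<subseteq> X"
    and T: "finite T" "X \<subseteq> fv.span T"
  shows "\<exists>t e. rel_basis X Y t e"
proof -
  obtain BY where BY: "BY \<subseteq> Y" "fv.independent BY" "Y \<subseteq> fv.span BY"
    by (rule fv.basis_exists)
  obtain B where B: "BY \<subseteq> B" "B \<subseteq> X" "fv.independent B" "X \<subseteq> fv.span B"
    using fv.maximal_independent_subset_extend[of BY X] BY(1,2) YX by (metis order_trans)
  have finB: "finite B" using fv.independent_span_bound[OF T(1) B(3)] B(2) T(2) by blast
  have finBY: "finite BY" using B(1) finB finite_subset by blast
  define D where "D = B - BY"
  have finD: "finite D" using finB by (simp add: D_def)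
  obtain h where h: "bij_betw h {..<card D} D"
    using ex_bij_betw_nat_finite[OF finD] by (auto simp: atLeast0LessThan)
  let ?n = "card D"
  have hD: "h ` {..<?n} = D" using h by (simp add: bij_betw_def)
  have "rel_basis X Y ?n h"
    unfolding rel_basis_def vspan_eq
  proof (intro conjI allI impI)
    fix i assume "i < ?n" then show "h i \<in> X" using hD B(2) D_def by auto
  next
    show "fv.span (Y \<union> h ` {..<?n}) = X"
    proof
      show "fv.span (Y \<union> h ` {..<?n}) \<subseteq> X"
        by (rule fv.span_minimal) (use YX hD B(2) D_def X in auto)
      have "B \<subseteq> Y \<union> h ` {..<?n}" using hD BY(1) D_def by auto
      then show "X \<subseteq> fv.span (Y \<union> h ` {..<?n})" using B(4) fv.span_mono by blast
    qed
  next
    fix u i assume s: "(\<Sum>i<?n. fscale (u i) (h i)) \<in> Y" and i: "i < ?n"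
    have "(\<Sum>i<?n. fscale (u i) (h i)) \<in> range (\<lambda>w. \<Sum>v\<in>BY. fscale (w v) v)"
      using s BY(3) fv.span_finite[OF finBY] by blast
    then obtain w where w: "(\<Sum>i<?n. fscale (u i) (h i)) = (\<Sum>v\<in>BY. fscale (w v) v)"
      by auto
    define c where "c x = (if x \<in> D then u (inv_into {..<?n} h x) else - w x)" for x
    have chi: "c (h j) = u j" if "j < ?n" for j
      using that h hD by (auto simp: c_def bij_betw_def)
    have sD: "(\<Sum>x\<in>D. fscale (c x) x) = (\<Sum>v\<in>BY. fscale (w v) v)"
    proof -
      have "(\<Sum>x\<in>D. fscale (c x) x) = (\<Sum>j<?n. fscale (c (h j)) (h j))"
        by (rule sum.reindex_bij_betw[OF h, symmetric])
      also have "\<dots> = (\<Sum>j<?n. fscale (u j) (h j))" by (rule sum.cong) (auto simp: chi)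
      finally show ?thesis using w by simp
    qed
    have sBY: "(\<Sum>x\<in>BY. fscale (c x) x) = - (\<Sum>v\<in>BY. fscale (w v) v)"
    proof -
      have "(\<Sum>x\<in>BY. fscale (c x) x) = (\<Sum>v\<in>BY. - fscale (w v) v)"
        by (rule sum.cong) (auto simp: c_def D_def)
      then show ?thesis by (simp add: sum_negf)
    qed
    have BDU: "B = D \<union> BY" and disj: "D \<inter> BY = {}" using B(1) by (auto simp: D_def)
    have "(\<Sum>x\<in>B. fscale (c x) x) = (\<Sum>x\<in>D. fscale (c x) x) + (\<Sum>x\<in>BY. fscale (c x) x)"
      unfolding BDU by (rule sum.union_disjoint[OF finD finBY disj])
    also have "\<dots> = 0" using sD sBY by simp
    finally have "(\<Sum>x\<in>B. fscale (c x) x) = 0" .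
    moreover have "h i \<in> B" using hD i D_def by auto
    ultimately have "c (h i) = 0" using fv.independentD[OF B(3) finB subset_refl] by blast
    then show "u i = 0" using chi[OF i] by simp
  qed
  then show ?thesis by blast
qed

lemma lin_on_zero: "lin_on S h \<Longrightarrow> 0 \<in> S \<Longrightarrow> h 0 = 0"
  unfolding lin_on_def by (metis fv.scale_zero_left)

lemma tilde_eq:
  assumes F: "lmap F" and fF: "\<forall>x\<in>X. F x = f x" and w: "w \<in> Lam2 X"
  shows "tilde f X w = HH F w"
proof -
  let ?P = "\<lambda>h. lin_on (Lam2 X) h \<and> (\<forall>x\<in>X. \<forall>y\<in>X. h (wedge x y) = wedge (f x) y + wedge x (f y))"
  have "?P (HH F)"
    unfolding lin_on_def using HH_add[OF F] HH_scale[OF F] HH_wedge[OF F] fF by auto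
  then have P: "?P (tilde f X)" unfolding tilde_def by (rule someI[of ?P])
  have z: "0 \<in> Lam2 X" by (rule fv.subspace_0[OF Lam2_subspace])
  have "w \<in> {w \<in> Lam2 X. tilde f X w = HH F w}"
  proof (rule fv.span_subspace_induct[OF w[unfolded Lam2_alt]])
    show "fv.subspace {w \<in> Lam2 X. tilde f X w = HH F w}"
    proof (rule fv.subspaceI)
      show "0 \<in> {w \<in> Lam2 X. tilde f X w = HH F w}"
        using z lin_on_zero[OF conjunct1[OF P] z] HH_zero[OF F] by simp
    next
      fix x y assume x: "x \<in> {w \<in> Lam2 X. tilde f X w = HH F w}" and y: "y \<in> {w \<in> Lam2 X. tilde f X w = HH F w}"
      then show "x + y \<in> {w \<in> Lam2 X. tilde f X w = HH F w}"
        using conjunct1[OF P] HH_add[OF F] fv.subspace_add[OF Lam2_subspace]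
        unfolding lin_on_def by auto
    next
      fix c x assume x: "x \<in> {w \<in> Lam2 X. tilde f X w = HH F w}"
      then show "fscale c x \<in> {w \<in> Lam2 X. tilde f X w = HH F w}"
        using conjunct1[OF P] HH_scale[OF F] fv.subspace_scale[OF Lam2_subspace]
        unfolding lin_on_def by auto
    qed
  next
    fix g assume "g \<in> {wedge x y | x y. x \<in> X \<and> y \<in> X}"
    then obtain x y where g: "g = wedge x y" "x \<in> X" "y \<in> X" by blast
    then show "g \<in> {w \<in> Lam2 X. tilde f X w = HH F w}"
      using conjunct2[OF P] HH_wedge[OF F] fF wedge_in_Lam2 by auto
  qed
  then show ?thesis by simp
qed

lemma ctr_vanish:
  assumes l: "lfun l" and z: "\<forall>x\<in>Z. l x = 0" and w: "w \<in> Lam2 Z"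
  shows "ctr l w = 0"
proof (rule ff.linear_eq_0_on_span[OF ctr_linear[OF l] _ w[unfolded Lam2_alt]])
  fix g assume "g \<in> {wedge x y | x y. x \<in> Z \<and> y \<in> Z}"
  then obtain x y where g: "g = wedge x y" "x \<in> Z" "y \<in> Z" by blast
  then show "ctr l g = 0" using z by (simp add: ctr_wedge[OF l])
qed

lemma ctr_agree:
  assumes l1: "lfun l1" and l2: "lfun l2" and eq: "\<forall>x\<in>X. l1 x = l2 x" and w: "w \<in> Lam2 X"
  shows "ctr l1 w = ctr l2 w"
proof (rule ff.linear_eq_on[OF ctr_linear[OF l1] ctr_linear[OF l2] w[unfolded Lam2_alt]])
  fix g assume "g \<in> {wedge x y | x y. x \<in> X \<and> y \<in> X}"
  then obtain x y where g: "g = wedge x y" "x \<in> X" "y \<in> X" by blast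
  then show "ctr l1 g = ctr l2 g" using eq by (simp add: ctr_wedge[OF l1] ctr_wedge[OF l2])
qed

lemma ctr_HH:
  assumes F: "lmap F" and mu: "lfun mu" and z: "\<forall>x\<in>X. mu x = 0" and w: "w \<in> Lam2 X"
  shows "ctr mu (HH F w) = ctr (mu \<circ> F) w"
proof -
  have l1: "lmap (ctr mu \<circ> HH F)"
    by (rule Vector_Spaces.linear_compose[OF HH_linear[OF F] ctr_linear[OF mu]])
  have muF: "lfun (mu \<circ> F)" by (rule Vector_Spaces.linear_compose[OF F mu])
  have "(ctr mu \<circ> HH F) w = ctr (mu \<circ> F) w"
  proof (rule ff.linear_eq_on[OF l1 ctr_linear[OF muF] w[unfolded Lam2_alt]])
    fix g assume "g \<in> {wedge x y | x y. x \<in> X \<and> y \<in> X}"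
    then obtain x y where g: "g = wedge x y" "x \<in> X" "y \<in> X" by blast
    then show "(ctr mu \<circ> HH F) g = ctr (mu \<circ> F) g"
      using z by (simp add: HH_wedge[OF F] ctr_add[OF mu] ctr_wedge[OF mu] ctr_wedge[OF muF])
  qed
  then show ?thesis by simp
qed

lemma wedge_expand:
  "wedge (x0 + fscale a c) (z0 + fscale b c) = wedge x0 z0 + wedge c (fscale a z0 - fscale b x0)"
  by (rule pair_ext, simp only: wedge_app fscale_app plus_fun_apply minus_apply, simp add: algebra_simps)

lemma Lam2_insert:
  assumes Y: "fv.subspace Y" and m: "m \<in> Lam2 (fv.span (insert c Y))"
  shows "\<exists>w y. w \<in> Lam2 Y \<and> y \<in> Y \<and> m = w + wedge c y"
proof -
  let ?S = "{w + wedge c y | w y. w \<in> Lam2 Y \<and> y \<in> Y}"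
  have memS: "w + wedge c y \<in> ?S" if "w \<in> Lam2 Y" "y \<in> Y" for w y
    using that by blast
  have "m \<in> ?S"
  proof (rule fv.span_subspace_induct[OF m[unfolded Lam2_alt]])
    show "fv.subspace ?S"
    proof (rule fv.subspaceI)
      show "0 \<in> ?S" using memS[OF fv.subspace_0[OF Lam2_subspace] fv.subspace_0[OF Y]]
        by (simp only: wedge_zero2 add_0_right)
    next
      fix u v assume "u \<in> ?S" "v \<in> ?S"
      then obtain w1 y1 w2 y2 where h: "w1 \<in> Lam2 Y" "y1 \<in> Y" "u = w1 + wedge c y1"
        "w2 \<in> Lam2 Y" "y2 \<in> Y" "v = w2 + wedge c y2" by blast
      have "u + v = (w1 + w2) + wedge c (y1 + y2)"
        unfolding h(3,6) wedge_add2 by (simp only: add_ac)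
      also have "\<dots> \<in> ?S"
        by (rule memS[OF fv.subspace_add[OF Lam2_subspace h(1,4)] fv.subspace_add[OF Y h(2,5)]])
      finally show "u + v \<in> ?S" .
    next
      fix a u assume "u \<in> ?S"
      then obtain w y where h: "w \<in> Lam2 Y" "y \<in> Y" "u = w + wedge c y" by blast
      have "fscale a u = fscale a w + wedge c (fscale a y)"
        unfolding h(3) by (simp only: wedge_scale2 fv.scale_right_distrib)
      also have "\<dots> \<in> ?S"
        by (rule memS[OF fv.subspace_scale[OF Lam2_subspace h(1)] fv.subspace_scale[OF Y h(2)]])
      finally show "fscale a u \<in> ?S" .
    qed
  next
    fix g assume "g \<in> {wedge x y | x y. x \<in> fv.span (insert c Y) \<and> y \<in> fv.span (insert c Y)}"
    then obtain x z where g: "g = wedge x z" "x \<in> fv.span (insert c Y)" "z \<in> fv.span (insert c Y)" by blast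
    have spY: "fv.span Y = Y" using Y by simp
    obtain a where a: "x - fscale a c \<in> Y" using g(2) spY fv.span_breakdown_eq by metis
    obtain b where b: "z - fscale b c \<in> Y" using g(3) spY fv.span_breakdown_eq by metis
    let ?x0 = "x - fscale a c" and ?z0 = "z - fscale b c"
    have "g = wedge (?x0 + fscale a c) (?z0 + fscale b c)" using g(1) by simp
    also have "\<dots> = wedge ?x0 ?z0 + wedge c (fscale a ?z0 - fscale b ?x0)" by (rule wedge_expand)
    also have "\<dots> \<in> ?S"
      by (rule memS[OF wedge_in_Lam2[OF a b] fv.subspace_diff[OF Y fv.subspace_scale[OF Y b] fv.subspace_scale[OF Y a]]])
    finally show "g \<in> ?S" .
  qed
  then show ?thesis by blast
qed

lemma ctr_step:
  assumes Z: "fv.subspace Z" and m: "m \<in> Lam2 (fv.span (insert c Z))"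
    and h: "\<And>l. lfun l \<Longrightarrow> \<forall>x\<in>Z. l x = 0 \<Longrightarrow> ctr l m = 0"
  shows "m \<in> Lam2 Z"
proof -
  obtain w y where wy: "w \<in> Lam2 Z" "y \<in> Z" "m = w + wedge c y"
    using Lam2_insert[OF Z m] by blast
  show ?thesis
  proof (cases "c \<in> Z")
    case True
    then show ?thesis using wy wedge_in_Lam2[OF True wy(2)] fv.subspace_add[OF Lam2_subspace] by simp
  next
    case False
    obtain l where l: "lfun l" "\<forall>x\<in>Z. l x = 0" "l c = 1"
      using sep_functional[OF Z False] by blast
    have "ctr l m = 0" using h l by blast
    moreover have "ctr l m = ctr l w + ctr l (wedge c y)" using wy(3) ctr_add[OF l(1)] by simp
    moreover have "ctr l w = 0" by (rule ctr_vanish[OF l(1,2) wy(1)])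
    moreover have "ctr l (wedge c y) = y" using l wy(2) by (simp add: ctr_wedge)
    ultimately have "y = 0" by simp
    then show ?thesis using wy by simp
  qed
qed

lemma ctr_criterion:
  assumes fin: "finite S" and X: "fv.subspace X"
    and m: "m \<in> Lam2 (fv.span (X \<union> S))"
    and h: "\<And>l. lfun l \<Longrightarrow> \<forall>x\<in>X. l x = 0 \<Longrightarrow> ctr l m = 0"
  shows "m \<in> Lam2 X"
  using fin m
proof (induction S rule: finite_induct)
  case empty
  have e: "fv.span (X \<union> {}) = X" using X by (simp only: fv.span_eq_iff Un_empty_right)
  show ?case using empty.prems unfolding e .
next
  case (insert c S)
  let ?Z = "fv.span (X \<union> S)"
  have eq: "fv.span (insert c ?Z) = fv.span (X \<union> insert c S)"
    unfolding fv.span_eq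
  proof
    show "insert c ?Z \<subseteq> fv.span (X \<union> insert c S)"
      using fv.span_mono[of "X \<union> S" "X \<union> insert c S"] fv.span_superset[of "X \<union> insert c S"] by blast
    show "X \<union> insert c S \<subseteq> fv.span (insert c ?Z)"
      using fv.span_superset[of "insert c ?Z"] fv.span_superset[of "X \<union> S"] by blast
  qed
  have "m \<in> Lam2 ?Z"
  proof (rule ctr_step[OF fv.subspace_span])
    show "m \<in> Lam2 (fv.span (insert c ?Z))" using insert.prems eq by simp
    fix l assume l: "lfun l" "\<forall>x\<in>?Z. l x = 0"
    then show "ctr l m = 0" using h fv.span_superset[of "X \<union> S"] by blast
  qed
  then show ?case by (rule insert.IH)
qed

lemma HH_Lam2:
  assumes F: "lmap F" and XZ: "X \<subseteq> Z" and FX: "F ` X \<subseteq> Z" and w: "w \<in> Lam2 X"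
  shows "HH F w \<in> Lam2 Z"
proof -
  have "w \<in> {w. HH F w \<in> Lam2 Z}"
  proof (rule fv.span_subspace_induct[OF w[unfolded Lam2_alt]])
    show "fv.subspace {w. HH F w \<in> Lam2 Z}"
      using ff.linear_subspace_vimage[OF HH_linear[OF F] Lam2_subspace] by (simp add: vimage_def)
    fix g assume "g \<in> {wedge x y | x y. x \<in> X \<and> y \<in> X}"
    then obtain x y where g: "g = wedge x y" "x \<in> X" "y \<in> X" by blast
    have "wedge (F x) y \<in> Lam2 Z" using g XZ FX by (intro wedge_in_Lam2) auto
    moreover have "wedge x (F y) \<in> Lam2 Z" using g XZ FX by (intro wedge_in_Lam2) auto
    ultimately show "g \<in> {w. HH F w \<in> Lam2 Z}"
      using g(1) HH_wedge[OF F] fv.subspace_add[OF Lam2_subspace] by simp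
  qed
  then show ?thesis by simp
qed

lemma rel_basis_cong:
  assumes "\<And>i. i < t \<Longrightarrow> e i = e' i"
  shows "rel_basis X Y t e = rel_basis X Y t e'"
proof -
  have "e ` {..<t} = e' ` {..<t}" using assms by (auto intro!: image_cong)
  moreover have "(\<Sum>i<t. fscale (u i) (e i)) = (\<Sum>i<t. fscale (u i) (e' i))" for u
    using assms by (intro sum.cong) auto
  ultimately show ?thesis unfolding rel_basis_def using assms by auto
qed

lemma extend_agree:
  assumes F: "lmap F" and A: "fv.subspace A" and f: "lin_on A f"
    and BA: "BA \<subseteq> A" "A \<subseteq> fv.span BA" and eq: "\<forall>x\<in>BA. F x = f x"
  shows "\<forall>x\<in>A. F x = f x"
proof
  fix x assume x: "x \<in> A"
  have "x \<in> {x \<in> A. F x = f x}"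
  proof (rule fv.span_subspace_induct[of x BA])
    show "x \<in> fv.span BA" using x BA by blast
    show "fv.subspace {x \<in> A. F x = f x}"
    proof (rule fv.subspaceI)
      show "0 \<in> {x \<in> A. F x = f x}"
        using fv.subspace_0[OF A] lin_on_zero[OF f] ff.linear_0[OF F] by simp
    next
      fix x y assume "x \<in> {x \<in> A. F x = f x}" "y \<in> {x \<in> A. F x = f x}"
      then show "x + y \<in> {x \<in> A. F x = f x}"
        using f fv.subspace_add[OF A] ff.linear_add[OF F] unfolding lin_on_def by auto
    next
      fix c x assume "x \<in> {x \<in> A. F x = f x}"
      then show "fscale c x \<in> {x \<in> A. F x = f x}"
        using f fv.subspace_scale[OF A] ff.linear_scale[OF F] unfolding lin_on_def by auto
    qed
    fix b assume "b \<in> BA" then show "b \<in> {x \<in> A. F x = f x}" using BA eq by auto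
  qed
  then show "F x = f x" by simp
qed

theorem lemma3p4:
  fixes V A B A' :: "('i \<Rightarrow> 'k::{field,finite}) set"
    and NV :: "('i \<times> 'i \<Rightarrow> 'k) set"
    and f :: "('i \<Rightarrow> 'k) \<Rightarrow> ('i \<Rightarrow> 'k)"
    and s :: nat and c :: "nat \<Rightarrow> ('i \<Rightarrow> 'k)"
  assumes V: "vsubspace V"
    and NV: "vsubspace NV" "NV \<subseteq> Lam2 V"
    and AB: "vsubspace A" "vsubspace B" "B \<subseteq> A" "A \<subseteq> V" "fin_dim A"
    and f_B: "f ` B \<subseteq> V"
    and f_deriv: "tilde f B ` (NV \<inter> Lam2 B) \<subseteq> NV"
    and f_lin: "lin_on A f"
    and free_A: "rel_basis A B s c"
    and free_U: "rel_basis (ssum A (f ` A)) (ssum A (f ` B)) s (f \<circ> c)"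
    and A': "vsubspace A'" "B \<subseteq> A'" "A' \<subseteq> A"
  defines "NU \<equiv> ssum (NV \<inter> Lam2 (ssum A (f ` B))) (tilde f A ` (NV \<inter> Lam2 A))"
  shows "(delta (\<lambda>X. NU \<inter> Lam2 X) (ssum A (f ` A')) (ssum A (f ` B))
           = delta (\<lambda>X. NV \<inter> Lam2 X) A' B) \<and>
         (\<forall>t e. rel_basis (NV \<inter> Lam2 A') (NV \<inter> Lam2 B) t e \<longrightarrow>
           rel_basis (NU \<inter> Lam2 (ssum A (f ` A'))) (NU \<inter> Lam2 (ssum A (f ` B))) t (tilde f A \<circ> e)) \<and>
         int (vdim (ssum A (f ` A'))) - int (vdim (ssum A (f ` B))) = int (vdim A') - int (vdim B)"
proof -
  have NVs: "fv.subspace NV" and As: "fv.subspace A" and Bs: "fv.subspace B"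
    and A's: "fv.subspace A'" using NV AB A' by (simp_all add: vsubspace_eq)
  obtain F0 where F0: "finite F0" "A = fv.span F0" using AB(5) by (auto simp: fin_dim_def vspan_eq)
  obtain BA where BA: "BA \<subseteq> A" "fv.independent BA" "A \<subseteq> fv.span BA" by (rule fv.basis_exists)
  obtain F where F: "lmap F" "\<forall>x\<in>BA. F x = f x"
    using ff.linear_independent_extend[OF BA(2), where f=f] by blast
  have FA: "\<forall>x\<in>A. F x = f x" by (rule extend_agree[OF F(1) As f_lin BA(1,3) F(2)])
  have FB: "\<forall>x\<in>B. F x = f x" using FA AB(3) by blast
  define W where "W = fv.span (A \<union> f ` B)"
  define U' where "U' = fv.span (A \<union> f ` A')"
  have W_eq: "ssum A (f ` B) = W" unfolding W_def ssum_def vspan_eq ..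
  have U'_eq: "ssum A (f ` A') = U'" unfolding U'_def ssum_def vspan_eq ..
  have Ws: "fv.subspace W" unfolding W_def by (rule fv.subspace_span)
  have U's: "fv.subspace U'" unfolding U'_def by (rule fv.subspace_span)
  have AW: "A \<subseteq> W" unfolding W_def using fv.span_superset[of "A \<union> f ` B"] by blast
  have fBW: "f ` B \<subseteq> W" unfolding W_def using fv.span_superset[of "A \<union> f ` B"] by blast
  have WU': "W \<subseteq> U'" unfolding W_def U'_def using A'(2) by (intro fv.span_mono) blast
  have AU': "A \<subseteq> U'" using AW WU' by (rule order_trans)
  have fA'U': "f ` A' \<subseteq> U'" unfolding U'_def using fv.span_superset[of "A \<union> f ` A'"] by blast
  from free_A have cA: "\<forall>i<s. c i \<in> A" and spA: "fv.span (B \<union> c ` {..<s}) = A"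
    and indA: "\<forall>u. (\<Sum>i<s. fscale (u i) (c i)) \<in> B \<longrightarrow> (\<forall>i<s. u i = 0)"
    by (auto simp: rel_basis_def vspan_eq)
  from free_U have indU: "\<forall>u. (\<Sum>i<s. fscale (u i) (f (c i))) \<in> W \<longrightarrow> (\<forall>i<s. u i = 0)"
    by (auto simp: rel_basis_def W_eq)
  define TT where "TT = F0 \<union> F ` F0"
  have finTT: "finite TT" using F0(1) by (simp add: TT_def)
  have Aspan: "A \<subseteq> fv.span TT" using F0(2) fv.span_mono[of F0 TT] by (auto simp: TT_def)
  have fAspan: "f ` A \<subseteq> fv.span TT"
  proof
    fix y assume "y \<in> f ` A"
    then obtain a where a: "a \<in> A" "y = f a" by blast
    have "F a \<in> F ` fv.span F0" using a(1) F0(2) by blast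
    also have "F ` fv.span F0 = fv.span (F ` F0)" by (rule ff.linear_span_image[OF F(1), symmetric])
    also have "\<dots> \<subseteq> fv.span TT" by (rule fv.span_mono) (auto simp: TT_def)
    finally show "y \<in> fv.span TT" using a FA by simp
  qed
  have Uall: "fv.span (A \<union> f ` A) \<subseteq> fv.span TT"
    by (rule fv.span_minimal) (use fAspan Aspan in auto)
  have WT: "W \<subseteq> fv.span TT"
    unfolding W_def using AB(3) fv.span_mono[of "A \<union> f ` B" "A \<union> f ` A"] Uall by blast
  have U'T: "U' \<subseteq> fv.span TT"
    unfolding U'_def using A'(3) fv.span_mono[of "A \<union> f ` A'" "A \<union> f ` A"] Uall by blast
  obtain BW where BW: "BW \<subseteq> W" "fv.independent BW" "W \<subseteq> fv.span BW" by (rule fv.basis_exists)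
  have indU': "\<forall>u. (\<Sum>i<s. fscale (u i) ((\<lambda>i. f (c i)) i)) \<in> W \<longrightarrow> (\<forall>i<s. u i = 0)"
    using indU by simp
  note RU = rel_indep[OF Ws BW(1,2) indU']
  have M: "\<exists>mu. lfun mu \<and> (\<forall>w\<in>W. mu w = 0) \<and> (\<forall>a\<in>A. mu (F a) = l a)"
    if l: "lfun l" "\<forall>b\<in>B. l b = 0" for l
  proof -
    let ?E = "(\<lambda>i. f (c i)) ` {..<s}"
    define g where "g x = (if x \<in> ?E then l (c (inv_into {..<s} (\<lambda>i. f (c i)) x)) else 0)" for x
    obtain mu where mu: "lfun mu" "\<forall>x\<in>BW \<union> ?E. mu x = g x"
      using fk.linear_independent_extend[OF RU(3), where f=g] by blast
    have BWE: "BW \<inter> ?E = {}" using RU(2) BW(1) by blast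
    have muW: "\<forall>w\<in>W. mu w = 0"
    proof
      fix w assume "w \<in> W"
      then have "w \<in> fv.span BW" using BW(3) by blast
      then show "mu w = 0" by (rule lfun_vanish_span[OF mu(1), rotated]) (use mu(2) BWE g_def in auto)
    qed
    have lmF: "lfun (mu \<circ> F)" by (rule Vector_Spaces.linear_compose[OF F(1) mu(1)])
    have eqb: "(mu \<circ> F) b = l b" if b: "b \<in> B \<union> c ` {..<s}" for b
      using b
    proof
      assume b: "b \<in> B"
      then have "F b \<in> W" using FB fBW by auto
      then show ?thesis using muW l(2) b by simp
    next
      assume "b \<in> c ` {..<s}"
      then obtain i where i: "i < s" "b = c i" by blast
      have "F b = f (c i)" using FA cA i by simp
      moreover have "f (c i) \<in> ?E" using i by blast
      moreover have "inv_into {..<s} (\<lambda>i. f (c i)) (f (c i)) = i" using inv_into_f_f[OF RU(1), of i] i by simp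
      ultimately show ?thesis using mu(2) i by (simp add: g_def)
    qed
    have "mu (F a) = l a" if a: "a \<in> A" for a
    proof -
      have "a \<in> fv.span (B \<union> c ` {..<s})" using a spA by simp
      from fk.linear_eq_on[OF lmF l(1) this eqb] show ?thesis by simp
    qed
    then show ?thesis using mu(1) muW by blast
  qed
  have K: "m \<in> Lam2 X" if X: "fv.subspace X" "B \<subseteq> X" "X \<subseteq> A" and m: "m \<in> Lam2 A"
      and Hm: "HH F m \<in> Lam2 (fv.span (A \<union> f ` X))" for X m
  proof (rule ctr_criterion[OF F0(1) X(1)])
    have "A \<subseteq> fv.span (X \<union> F0)" using F0(2) fv.span_mono[of F0 "X \<union> F0"] by blast
    then show "m \<in> Lam2 (fv.span (X \<union> F0))" using m Lam2_mono by blast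
  next
    fix l assume l: "lfun l" "\<forall>x\<in>X. l x = 0"
    then have lB: "\<forall>b\<in>B. l b = 0" using X(2) by blast
    obtain mu where mu: "lfun mu" "\<forall>w\<in>W. mu w = 0" "\<forall>a\<in>A. mu (F a) = l a"
      using M[OF l(1) lB] by blast
    have muF: "lfun (mu \<circ> F)" by (rule Vector_Spaces.linear_compose[OF F(1) mu(1)])
    have "ctr l m = ctr (mu \<circ> F) m" by (rule ctr_agree[OF l(1) muF _ m]) (use mu(3) in auto)
    also have "\<dots> = ctr mu (HH F m)" by (rule ctr_HH[OF F(1) mu(1) _ m, symmetric]) (use mu(2) AW in auto)
    also have "\<dots> = 0"
    proof (rule ctr_vanish[OF mu(1) _ Hm], rule ballI)
      fix x assume "x \<in> fv.span (A \<union> f ` X)"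
      then show "mu x = 0"
      proof (rule lfun_vanish_span[OF mu(1), rotated])
        fix y assume "y \<in> A \<union> f ` X"
        then show "mu y = 0"
        proof
          assume "y \<in> A" then show ?thesis using mu(2) AW by auto
        next
          assume "y \<in> f ` X"
          then obtain x where "x \<in> X" "y = f x" by blast
          then show ?thesis using mu(3) FA l(2) X(3) by auto
        qed
      qed
    qed
    finally show "ctr l m = 0" .
  qed
  define NW where "NW = NV \<inter> Lam2 W"
  define NB where "NB = NV \<inter> Lam2 B"
  define NA where "NA = NV \<inter> Lam2 A"
  have NWs: "fv.subspace NW" unfolding NW_def by (rule fv.subspace_inter[OF NVs Lam2_subspace])
  have NBs: "fv.subspace NB" unfolding NB_def by (rule fv.subspace_inter[OF NVs Lam2_subspace])
  have NAs: "fv.subspace NA" unfolding NA_def by (rule fv.subspace_inter[OF NVs Lam2_subspace])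
  have tilA: "tilde f A ` NA = HH F ` NA"
  proof (rule image_cong[OF refl])
    fix m assume "m \<in> NA"
    then have "m \<in> Lam2 A" by (simp add: NA_def)
    then show "tilde f A m = HH F m" by (rule tilde_eq[OF F(1) FA])
  qed
  have NU_eq: "NU = fv.span (NW \<union> HH F ` NA)"
    unfolding NU_def W_eq unfolding ssum_def vspan_eq NW_def[symmetric] NA_def[symmetric] tilA ..
  have NUs: "fv.subspace NU" unfolding NU_eq by (rule fv.subspace_span)
  have NWNU: "NW \<subseteq> NU" unfolding NU_eq using fv.span_superset[of "NW \<union> HH F ` NA"] by blast
  have HHNA: "HH F ` NA \<subseteq> NU" unfolding NU_eq using fv.span_superset[of "NW \<union> HH F ` NA"] by blast
  have BW: "B \<subseteq> W" using AB(3) AW by (rule order_trans)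
  have FBW: "F ` B \<subseteq> W" using FB fBW by auto
  have HHNB: "HH F ` NB \<subseteq> NW"
  proof
    fix v assume "v \<in> HH F ` NB"
    then obtain m where m: "m \<in> NB" "v = HH F m" by blast
    have mL: "m \<in> Lam2 B" using m(1) by (simp add: NB_def)
    have "tilde f B m = HH F m" by (rule tilde_eq[OF F(1) FB mL])
    moreover have "tilde f B m \<in> NV" using f_deriv m(1) by (auto simp: NB_def)
    moreover have "HH F m \<in> Lam2 W" by (rule HH_Lam2[OF F(1) BW FBW mL])
    ultimately show "v \<in> NW" using m(2) by (simp add: NW_def)
  qed
  have NWL: "NW \<subseteq> Lam2 W" by (simp add: NW_def)
  have decomp: "\<exists>n m. n \<in> NW \<and> m \<in> NA \<and> v = n + HH F m" if v: "v \<in> NU" for v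
  proof -
    have spNW: "fv.span NW = NW" using NWs by simp
    have spNA: "fv.span NA = NA" using NAs by simp
    have spHH: "fv.span (HH F ` NA) = HH F ` NA"
      using ff.linear_span_image[OF HH_linear[OF F(1)], of NA] unfolding spNA .
    show ?thesis using v unfolding NU_eq fv.span_Un spNW spHH by blast
  qed
  have GC: "\<exists>n m. n \<in> NW \<and> m \<in> NV \<inter> Lam2 X \<and> v = n + HH F m"
    if X: "fv.subspace X" "B \<subseteq> X" "X \<subseteq> A" and v: "v \<in> NU" "v \<in> Lam2 (fv.span (A \<union> f ` X))" for X v
  proof -
    obtain n m where nm: "n \<in> NW" "m \<in> NA" "v = n + HH F m" using decomp[OF v(1)] by blast
    have "W \<subseteq> fv.span (A \<union> f ` X)" unfolding W_def using X(2) by (intro fv.span_mono) blast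
    then have nL: "n \<in> Lam2 (fv.span (A \<union> f ` X))" using nm(1) NWL Lam2_mono by blast
    have "HH F m \<in> Lam2 (fv.span (A \<union> f ` X))"
      using fv.subspace_diff[OF Lam2_subspace v(2) nL] nm(3) by simp
    then have "m \<in> Lam2 X" using K[OF X] nm(2) by (simp add: NA_def)
    then show ?thesis using nm by (auto simp: NA_def)
  qed
  have NUW: "NU \<inter> Lam2 W = NW"
  proof
    show "NU \<inter> Lam2 W \<subseteq> NW"
    proof
      fix v assume v: "v \<in> NU \<inter> Lam2 W"
      obtain n m where nm: "n \<in> NW" "m \<in> NV \<inter> Lam2 B" "v = n + HH F m"
        using GC[OF Bs order_refl AB(3)] v unfolding W_def by blast
      have "HH F m \<in> NW" using HHNB nm(2) by (auto simp: NB_def)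
      then show "v \<in> NW" using nm fv.subspace_add[OF NWs] by simp
    qed
    show "NW \<subseteq> NU \<inter> Lam2 W" using NWNU NWL by blast
  qed
  have NA'A: "NV \<inter> Lam2 A' \<subseteq> NA" using Lam2_mono[OF A'(3)] by (auto simp: NA_def)
  have FA'U': "F ` A' \<subseteq> U'" using FA A'(3) fA'U' by auto
  have A'U': "A' \<subseteq> U'" using A'(3) AU' by (rule order_trans)
  have NWU': "NW \<subseteq> NU \<inter> Lam2 U'" using NWNU NWL Lam2_mono[OF WU'] by blast
  have C2: "rel_basis (NU \<inter> Lam2 U') NW t (HH F \<circ> e)"
    if e: "rel_basis (NV \<inter> Lam2 A') NB t e" for t e
  proof -
    from e have eA': "\<forall>i<t. e i \<in> NV \<inter> Lam2 A'" and spe: "fv.span (NB \<union> e ` {..<t}) = NV \<inter> Lam2 A'"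
      and inde: "\<forall>u. (\<Sum>i<t. fscale (u i) (e i)) \<in> NB \<longrightarrow> (\<forall>i<t. u i = 0)"
      by (auto simp: rel_basis_def vspan_eq)
    have HHU': "HH F m \<in> Lam2 U'" if "m \<in> Lam2 A'" for m
      by (rule HH_Lam2[OF F(1) A'U' FA'U' that])
    have el: "(HH F \<circ> e) i \<in> NU \<inter> Lam2 U'" if i: "i < t" for i
      using eA' i HHNA NA'A HHU' by auto
    show ?thesis unfolding rel_basis_def vspan_eq
    proof (intro conjI allI impI)
      fix i assume i: "i < t"
      show "(HH F \<circ> e) i \<in> NU \<inter> Lam2 U'" by (rule el[OF i])
    next
      show "fv.span (NW \<union> (HH F \<circ> e) ` {..<t}) = NU \<inter> Lam2 U'"
      proof
        show "fv.span (NW \<union> (HH F \<circ> e) ` {..<t}) \<subseteq> NU \<inter> Lam2 U'"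
          by (rule fv.span_minimal) (use NWU' el fv.subspace_inter[OF NUs Lam2_subspace] in auto)
        show "NU \<inter> Lam2 U' \<subseteq> fv.span (NW \<union> (HH F \<circ> e) ` {..<t})"
        proof
          fix v assume v: "v \<in> NU \<inter> Lam2 U'"
          obtain n m where nm: "n \<in> NW" "m \<in> NV \<inter> Lam2 A'" "v = n + HH F m"
            using GC[OF A's A'(2,3)] v unfolding U'_def by blast
          have "m \<in> fv.span (NB \<union> e ` {..<t})" using nm(2) spe by simp
          then have "HH F m \<in> HH F ` fv.span (NB \<union> e ` {..<t})" by blast
          also have "\<dots> = fv.span (HH F ` (NB \<union> e ` {..<t}))"
            by (rule ff.linear_span_image[OF HH_linear[OF F(1)], symmetric])
          also have "\<dots> \<subseteq> fv.span (NW \<union> (HH F \<circ> e) ` {..<t})"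
            by (rule fv.span_mono) (use HHNB in \<open>auto simp: image_Un image_comp\<close>)
          finally have hm: "HH F m \<in> fv.span (NW \<union> (HH F \<circ> e) ` {..<t})" .
          have hn: "n \<in> fv.span (NW \<union> (HH F \<circ> e) ` {..<t})"
            using nm(1) fv.span_superset[of "NW \<union> (HH F \<circ> e) ` {..<t}"] by blast
          show "v \<in> fv.span (NW \<union> (HH F \<circ> e) ` {..<t})"
            using nm(3) fv.span_add[OF hn hm] by simp
        qed
      qed
    next
      fix u i assume s: "(\<Sum>i<t. fscale (u i) ((HH F \<circ> e) i)) \<in> NW" and i: "i < t"
      let ?m = "\<Sum>i<t. fscale (u i) (e i)"
      have HHm: "HH F ?m = (\<Sum>i<t. fscale (u i) ((HH F \<circ> e) i))"
        by (simp add: ff.linear_sum[OF HH_linear[OF F(1)]] ff.linear_scale[OF HH_linear[OF F(1)]])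
      have mA': "?m \<in> NV \<inter> Lam2 A'"
        by (rule fv.subspace_sum[OF fv.subspace_inter[OF NVs Lam2_subspace]])
          (use eA' fv.subspace_scale[OF fv.subspace_inter[OF NVs Lam2_subspace]] in auto)
      have "?m \<in> Lam2 B"
      proof (rule K[OF Bs order_refl AB(3)])
        show "?m \<in> Lam2 A" using mA' NA'A by (auto simp: NA_def)
        show "HH F ?m \<in> Lam2 (fv.span (A \<union> f ` B))" using HHm s NWL unfolding W_def by auto
      qed
      then have "?m \<in> NB" using mA' by (simp add: NB_def)
      from inde[rule_format, OF this i] show "u i = 0" .
    qed
  qed
  obtain d g where g: "rel_basis A' B d g"
    using rel_basis_exists[OF A's Bs A'(2) F0(1)] A'(3) F0(2) by blast
  from g have gA': "\<forall>i<d. g i \<in> A'" and spg: "fv.span (B \<union> g ` {..<d}) = A'"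
    and indg: "\<forall>u. (\<Sum>i<d. fscale (u i) (g i)) \<in> B \<longrightarrow> (\<forall>i<d. u i = 0)"
    by (auto simp: rel_basis_def vspan_eq)
  have C3: "rel_basis U' W d (F \<circ> g)"
    unfolding rel_basis_def vspan_eq
  proof (intro conjI allI impI)
    fix i assume i: "i < d"
    show "(F \<circ> g) i \<in> U'" using gA' i FA'U' by auto
  next
    let ?X = "fv.span (W \<union> (F \<circ> g) ` {..<d})"
    show "?X = U'"
    proof
      show "?X \<subseteq> U'" by (rule fv.span_minimal) (use WU' gA' FA'U' U's in auto)
      have WX: "W \<subseteq> ?X" using fv.span_superset[of "W \<union> (F \<circ> g) ` {..<d}"] by blast
      have "f ` A' \<subseteq> ?X"
      proof
        fix y assume "y \<in> f ` A'"
        then obtain a where a: "a \<in> A'" "y = f a" by blast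
        have "F a \<in> F ` fv.span (B \<union> g ` {..<d})" using a(1) spg by simp
        also have "\<dots> = fv.span (F ` (B \<union> g ` {..<d}))" by (rule ff.linear_span_image[OF F(1), symmetric])
        also have "\<dots> \<subseteq> ?X"
        proof (rule fv.span_minimal[OF _ fv.subspace_span])
          show "F ` (B \<union> g ` {..<d}) \<subseteq> ?X"
            using FBW WX fv.span_superset[of "W \<union> (F \<circ> g) ` {..<d}"] by (auto simp: image_comp)
        qed
        finally show "y \<in> ?X" using a FA A'(3) by auto
      qed
      then show "U' \<subseteq> ?X" unfolding U'_def using AW WX by (intro fv.span_minimal) auto
    qed
  next
    fix u i assume s: "(\<Sum>i<d. fscale (u i) ((F \<circ> g) i)) \<in> W" and i: "i < d"
    let ?v = "\<Sum>i<d. fscale (u i) (g i)"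
    have Fv: "F ?v = (\<Sum>i<d. fscale (u i) ((F \<circ> g) i))"
      by (simp add: ff.linear_sum[OF F(1)] ff.linear_scale[OF F(1)])
    have vA': "?v \<in> A'" by (rule fv.subspace_sum[OF A's]) (use gA' fv.subspace_scale[OF A's] in auto)
    have "?v \<in> B"
    proof (rule ccontr)
      assume nv: "?v \<notin> B"
      obtain l where l: "lfun l" "\<forall>y\<in>B. l y = 0" "l ?v = 1" using sep_functional[OF Bs nv] by blast
      obtain mu where mu: "lfun mu" "\<forall>w\<in>W. mu w = 0" "\<forall>a\<in>A. mu (F a) = l a"
        using M[OF l(1,2)] by blast
      have "mu (F ?v) = 1" using mu(3) vA' A'(3) l(3) by auto
      moreover have "mu (F ?v) = 0" using mu(2) s Fv by simp
      ultimately show False by simp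
    qed
    from indg[rule_format, OF this i] show "u i = 0" .
  qed
  have BT: "B \<subseteq> fv.span F0" using AB(3) F0(2) by simp
  have dA': "fv.dim A' = fv.dim B + d" by (rule rel_basis_dim[OF g Bs F0(1) BT])
  have dU': "fv.dim U' = fv.dim W + d" by (rule rel_basis_dim[OF C3 Ws finTT WT])
  obtain T2 where T2: "finite T2" "Lam2 A' \<subseteq> fv.span T2"
    using Lam2_fin[OF F0(1)] A'(3) F0(2) by blast
  obtain T3 where T3: "finite T3" "Lam2 W \<subseteq> fv.span T3" using Lam2_fin[OF finTT WT] by blast
  have NA's: "fv.subspace (NV \<inter> Lam2 A')" by (rule fv.subspace_inter[OF NVs Lam2_subspace])
  have NBNA': "NB \<subseteq> NV \<inter> Lam2 A'" using Lam2_mono[OF A'(2)] by (auto simp: NB_def)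
  obtain t e where e: "rel_basis (NV \<inter> Lam2 A') NB t e"
    using rel_basis_exists[OF NA's NBs NBNA' T2(1)] T2(2) by blast
  have d1: "fv.dim (NV \<inter> Lam2 A') = fv.dim NB + t"
    by (rule rel_basis_dim[OF e NBs T2(1)]) (use NBNA' T2(2) in auto)
  have d2: "fv.dim (NU \<inter> Lam2 U') = fv.dim NW + t"
    by (rule rel_basis_dim[OF C2[OF e] NWs T3(1)]) (use NWL T3(2) in auto)
  have P1: "delta (\<lambda>X. NU \<inter> Lam2 X) (ssum A (f ` A')) (ssum A (f ` B))
           = delta (\<lambda>X. NV \<inter> Lam2 X) A' B"
    unfolding delta_def vdim_eq U'_eq W_eq NUW NB_def[symmetric] using d1 d2 dA' dU' by simp
  have P2: "\<forall>t e. rel_basis (NV \<inter> Lam2 A') (NV \<inter> Lam2 B) t e \<longrightarrow>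
           rel_basis (NU \<inter> Lam2 (ssum A (f ` A'))) (NU \<inter> Lam2 (ssum A (f ` B))) t (tilde f A \<circ> e)"
  proof (intro allI impI)
    fix t e assume e: "rel_basis (NV \<inter> Lam2 A') (NV \<inter> Lam2 B) t e"
    then have e': "rel_basis (NV \<inter> Lam2 A') NB t e" by (simp add: NB_def)
    from e' have eA': "\<forall>i<t. e i \<in> NV \<inter> Lam2 A'" by (simp add: rel_basis_def)
    have "rel_basis (NU \<inter> Lam2 U') NW t (tilde f A \<circ> e) = rel_basis (NU \<inter> Lam2 U') NW t (HH F \<circ> e)"
    proof (rule rel_basis_cong)
      fix i assume "i < t"
      then have "e i \<in> Lam2 A" using eA' Lam2_mono[OF A'(3)] by blast
      then show "(tilde f A \<circ> e) i = (HH F \<circ> e) i" using tilde_eq[OF F(1) FA] by simp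
    qed
    then show "rel_basis (NU \<inter> Lam2 (ssum A (f ` A'))) (NU \<inter> Lam2 (ssum A (f ` B))) t (tilde f A \<circ> e)"
      unfolding U'_eq W_eq NUW using C2[OF e'] by simp
  qed
  have P3: "int (vdim (ssum A (f ` A'))) - int (vdim (ssum A (f ` B))) = int (vdim A') - int (vdim B)"
    unfolding U'_eq W_eq vdim_eq using dA' dU' by simp
  show ?thesis using P1 P2 P3 by blast
qed

end
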